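(* Let $\mu\in(0,1/2]$. For every $(g_0,c_0)\in S$ there exists a smooth function $f:\mathbb R\to\mathbb R$ with $f(g_0)=c_0$ such that $$\frac{d}{dg}\Big|_{g=g_0}R_S(g,f(g))\neq0,$$ where $R_S(g,c)=2\sqrt{\frac{\sqrt{1-gc}}{g-c+2\sqrt{(1-2\mu)^2-gc}}}\,\frac{K(r_2)}{K(k_1)}$.
   Context: $c_J=-1-2\sqrt{\mu(1-\mu)}$, $c_h=-1+2\mu$. The region $S$ in the $(g,c)$-plane is $S=\{c<c_J,\ -c-2<g<-c-2(1-2\mu)\}\cup\{c_J\le c<c_h,\ (1-2\mu)^2/c<g<-c-2(1-2\mu)\}$. $K(k)=\frac{\pi}{2}\sum_{n\ge0}\big(\frac{(2n-1)!!}{(2n)!!}\big)^2k^{2n}$ is the complete elliptic integral of the first kind, $k_1^2=\frac12\big(1-\frac{g-c}{2\sqrt{1-gc}}\big)$, $r_2^2=\frac{g-c-2\sqrt{(1-2\mu)^2-gc}}{g-c+2\sqrt{(1-2\mu)^2-gc}}$. $R_S$ is the rotation function (ratio of $\eta$- to $\xi$-period) of the Euler problem with mass ratio $\mu$ in the region $S$. *)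

theory Defs
  imports "HOL-Analysis.Analysis"
begin

text \<open>Double factorial, with the convention (-1)!! = 0!! = 1 (note 2*0-1 = 0 on nat).\<close>
fun dfact :: "nat \<Rightarrow> nat" where
  "dfact 0 = 1"
| "dfact (Suc 0) = 1"
| "dfact (Suc (Suc n)) = Suc (Suc n) * dfact n"

definition ellK :: "real \<Rightarrow> real" where
  "ellK k = pi / 2 * (\<Sum>n. (real (dfact (2*n - 1)) / real (dfact (2*n)))^2 * k^(2*n))"

definition cJ :: "real \<Rightarrow> real" where
  "cJ \<mu> = -1 - 2 * sqrt (\<mu> * (1 - \<mu>))"

definition ch :: "real \<Rightarrow> real" where
  "ch \<mu> = -1 + 2 * \<mu>"

definition regionS :: "real \<Rightarrow> (real \<times> real) set" where
  "regionS \<mu> =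
     {(g, c). c < cJ \<mu> \<and> -c - 2 < g \<and> g < -c - 2 * (1 - 2*\<mu>)}
   \<union> {(g, c). cJ \<mu> \<le> c \<and> c < ch \<mu> \<and> (1 - 2*\<mu>)^2 / c < g \<and> g < -c - 2 * (1 - 2*\<mu>)}"

definition k1sq :: "real \<Rightarrow> real \<Rightarrow> real" where
  "k1sq g c = (1 - (g - c) / (2 * sqrt (1 - g*c))) / 2"

definition r2sq :: "real \<Rightarrow> real \<Rightarrow> real \<Rightarrow> real" where
  "r2sq \<mu> g c = (g - c - 2 * sqrt ((1 - 2*\<mu>)^2 - g*c)) / (g - c + 2 * sqrt ((1 - 2*\<mu>)^2 - g*c))"

definition rotS :: "real \<Rightarrow> real \<Rightarrow> real \<Rightarrow> real" where
  "rotS \<mu> g c = 2 * sqrt (sqrt (1 - g*c) / (g - c + 2 * sqrt ((1 - 2*\<mu>)^2 - g*c)))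
      * ellK (sqrt (r2sq \<mu> g c)) / ellK (sqrt (k1sq g c))"

definition smooth_real :: "(real \<Rightarrow> real) \<Rightarrow> bool" where
  "smooth_real f \<longleftrightarrow> (\<exists>D :: nat \<Rightarrow> real \<Rightarrow> real. D 0 = f \<and>
      (\<forall>n x. (D n has_real_derivative D (Suc n) x) (at x)))"

end

theory Submission
  imports Defs
begin


lemma dfact_pos: "0 < dfact n"
  by (induction n rule: dfact.induct) auto

lemma dfact_mono: "dfact n \<le> dfact (Suc n)"
proof (induction n rule: less_induct)
  case (less n)
  show ?case
  proof (cases n)
    case 0 then show ?thesis by simp
  next
    case (Suc k)
    show ?thesis
    proof (cases k)
      case 0 then show ?thesis using Suc by simp
    next
      case (Suc j)
      have "dfact j \<le> dfact (Suc j)" using less \<open>n = Suc k\<close> Suc by simp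
      then have "(Suc (Suc j)) * dfact j \<le> (Suc (Suc (Suc j))) * dfact (Suc j)"
        by (intro mult_le_mono) auto
      then show ?thesis using \<open>n = Suc k\<close> Suc by simp
    qed
  qed
qed

definition Ec :: "nat \<Rightarrow> real" where
  "Ec n = (real (dfact (2*n - 1)) / real (dfact (2*n)))^2"

lemma Ec_bounds: "0 \<le> Ec n \<and> Ec n \<le> 1"
proof -
  have "dfact (2*n - 1) \<le> dfact (2*n)"
  proof (cases n)
    case 0 then show ?thesis by simp
  next
    case (Suc k)
    then have "2*n = Suc (2*n - 1)" by simp
    then show ?thesis using dfact_mono by metis
  qed
  then have "real (dfact (2*n - 1)) / real (dfact (2*n)) \<le> 1"
    using dfact_pos[of "2*n"] by (simp add: divide_le_eq)
  moreover have "0 \<le> real (dfact (2*n - 1)) / real (dfact (2*n))" by simp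
  ultimately show ?thesis unfolding Ec_def by (simp add: power_le_one)
qed

definition EE :: "real \<Rightarrow> real" where
  "EE x = pi / 2 * (\<Sum>n. Ec n * x^n)"

definition EE' :: "real \<Rightarrow> real" where
  "EE' x = pi / 2 * (\<Sum>n. diffs Ec n * x^n)"

lemma Ec_summable: "\<bar>x\<bar> < 1 \<Longrightarrow> summable (\<lambda>n. Ec n * x^n)"
proof (rule summable_comparison_test[where g = "\<lambda>n. \<bar>x\<bar>^n"])
  assume "\<bar>x\<bar> < 1"
  show "\<exists>N. \<forall>n\<ge>N. norm (Ec n * x ^ n) \<le> \<bar>x\<bar> ^ n"
    using Ec_bounds by (auto simp: abs_mult power_abs intro!: mult_left_le_one_le)
  show "summable (\<lambda>n. \<bar>x\<bar> ^ n)" using \<open>\<bar>x\<bar> < 1\<close> by (simp add: summable_geometric)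
qed

lemma ellK_sqrt: "0 \<le> x \<Longrightarrow> ellK (sqrt x) = EE x"
  unfolding ellK_def EE_def
  by (simp add: power_mult Ec_def)

lemma EE_pos: "0 \<le> x \<Longrightarrow> x < 1 \<Longrightarrow> 0 < EE x"
proof -
  assume "0 \<le> x" "x < 1"
  have "0 < (\<Sum>n. Ec n * x^n)"
    by (rule suminf_pos2[where i=0]) (use Ec_summable Ec_bounds \<open>0 \<le> x\<close> \<open>x < 1\<close> in \<open>auto simp: Ec_def\<close>)
  then show ?thesis unfolding EE_def by simp
qed

lemma EE'_nonneg: "0 \<le> x \<Longrightarrow> x < 1 \<Longrightarrow> 0 \<le> EE' x"
proof -
  assume "0 \<le> x" "x < 1"
  have "summable (\<lambda>n. diffs Ec n * x ^ n)"
    by (rule termdiff_converges[where K=1]) (use Ec_summable \<open>0 \<le> x\<close> \<open>x < 1\<close> in auto)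
  then have "0 \<le> (\<Sum>n. diffs Ec n * x^n)"
    by (rule suminf_nonneg) (use Ec_bounds \<open>0 \<le> x\<close> in \<open>auto simp: diffs_def\<close>)
  then show ?thesis unfolding EE'_def by simp
qed

lemma EE_deriv: "0 < x \<Longrightarrow> x < 1 \<Longrightarrow> ((\<lambda>y. ellK (sqrt y)) has_real_derivative EE' x) (at x)"
proof -
  assume x: "0 < x" "x < 1"
  define K where "K = (1 + x) / 2"
  have K: "x < K" "K < 1" "0 < K" using x by (auto simp: K_def)
  have "DERIV (\<lambda>x. \<Sum>n. Ec n * x^n) x :> (\<Sum>n. diffs Ec n * x^n)"
    by (rule termdiffs_strong[where K=K]) (use K x Ec_summable[of K] in auto)
  then have "((\<lambda>x. pi/2 * (\<Sum>n. Ec n * x^n)) has_real_derivative pi/2 * (\<Sum>n. diffs Ec n * x^n)) (at x)"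
    by (rule DERIV_cmult)
  then have "(EE has_real_derivative EE' x) (at x)"
    unfolding EE_def[abs_def] EE'_def .
  then show ?thesis
    by (rule has_field_derivative_transform_within_open[where S="{0<..<1}"]) (use x ellK_sqrt in auto)
qed

lemma EE_chain:
  assumes "(h has_real_derivative h') (at x)" "0 < h x" "h x < 1"
  shows "((\<lambda>y. ellK (sqrt (h y))) has_real_derivative EE' (h x) * h') (at x)"
  using DERIV_chain2[OF EE_deriv[OF assms(2,3)] assms(1)] by simp



lemma sqrt_chain:
  assumes "(h has_real_derivative h') (at x)" "0 < h x"
  shows "((\<lambda>y. sqrt (h y)) has_real_derivative h' / (2 * sqrt (h x))) (at x)"
proof -
  have eq: "inverse (sqrt (h x)) / 2 * h' = h' / (2 * sqrt (h x))"
    by (simp add: field_simps)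
  show ?thesis using DERIV_chain2[OF DERIV_real_sqrt[OF assms(2)] assms(1)] unfolding eq .
qed

definition Gf :: "real \<Rightarrow> real \<Rightarrow> real \<Rightarrow> real" where
  "Gf m2 u p = 2 * sqrt (sqrt (1 - p) / (u + 2 * sqrt (m2 - p)))
      * ellK (sqrt ((u - 2 * sqrt (m2 - p)) / (u + 2 * sqrt (m2 - p))))
      / ellK (sqrt ((1 - u / (2 * sqrt (1 - p))) / 2))"

lemma rotS_Gf: "rotS \<mu> g c = Gf ((1 - 2*\<mu>)^2) (g - c) (g * c)"
  unfolding rotS_def Gf_def r2sq_def k1sq_def by simp

definition DG :: "real \<Rightarrow> real \<Rightarrow> real \<Rightarrow> real \<Rightarrow> real \<Rightarrow> real" where
  "DG m2 u0 p0 a b = (let t = sqrt (1 - p0); s = sqrt (m2 - p0); Q = u0 + 2 * s;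
     dt = - b / (2 * t); ds = - b / (2 * s); dQ = a + 2 * ds;
     V = t / Q; dV = (dt * Q - t * dQ) / (Q * Q);
     P = 2 * sqrt V; dP = 2 * (dV / (2 * sqrt V));
     r = (u0 - 2 * s) / Q; dr = ((a - 2 * ds) * Q - (u0 - 2 * s) * dQ) / (Q * Q);
     k = (1 - u0 / (2 * t)) / 2; dk = - ((a * (2 * t) - u0 * (2 * dt)) / ((2 * t) * (2 * t))) / 2;
     Er = EE r; Ek = EE k
   in ((dP * Er + EE' r * dr * P) * Ek - (P * Er) * (EE' k * dk)) / (Ek * Ek))"

lemma L:
  fixes u p :: "real \<Rightarrow> real"
  assumes du: "(u has_real_derivative a) (at x)" and dp: "(p has_real_derivative b) (at x)"
    and h1: "p x < m2" and h1': "p x < 1"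
    and h3: "2 * sqrt (m2 - p x) < u x" and h4: "u x < 2 * sqrt (1 - p x)"
  shows "((\<lambda>y. Gf m2 (u y) (p y)) has_real_derivative DG m2 (u x) (p x) a b) (at x)"
proof -
  define t where "t = sqrt (1 - p x)"
  define s where "s = sqrt (m2 - p x)"
  define Q where "Q = u x + 2 * s"
  define dt where "dt = - b / (2 * t)"
  define ds where "ds = - b / (2 * s)"
  define dQ where "dQ = a + 2 * ds"
  define V where "V = t / Q"
  define dV where "dV = (dt * Q - t * dQ) / (Q * Q)"
  define P where "P = 2 * sqrt V"
  define dP where "dP = 2 * (dV / (2 * sqrt V))"
  define r where "r = (u x - 2 * s) / Q"
  define dr where "dr = ((a - 2 * ds) * Q - (u x - 2 * s) * dQ) / (Q * Q)"
  define k where "k = (1 - u x / (2 * t)) / 2"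
  define dk where "dk = - ((a * (2 * t) - u x * (2 * dt)) / ((2 * t) * (2 * t))) / 2"
  have tpos: "0 < t" using h1' by (simp add: t_def)
  have spos: "0 < s" using h1 by (simp add: s_def)
  have Qpos: "0 < Q" using h3 spos unfolding Q_def s_def by linarith
  have Vpos: "0 < V" using tpos Qpos by (simp add: V_def)
  have r01: "0 < r" "r < 1"
  proof -
    have "0 < u x - 2 * s" using h3 by (simp add: s_def)
    then show "0 < r" using Qpos by (simp add: r_def)
    show "r < 1" using Qpos spos by (simp add: r_def Q_def divide_less_eq)
  qed
  have k01: "0 < k" "k < 1"
  proof -
    have "u x < 2 * t" using h4 by (simp add: t_def)
    then have a1: "u x / (2 * t) < 1" using tpos by (simp add: divide_less_eq)
    have "0 < u x" using h3 spos unfolding s_def by linarith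
    then have a2: "0 < u x / (2 * t)" using tpos by simp
    show "0 < k" using a1 by (simp add: k_def)
    show "k < 1" using a2 by (simp add: k_def)
  qed
  have ht: "((\<lambda>y. sqrt (1 - p y)) has_real_derivative dt) (at x)"
    using sqrt_chain[OF DERIV_diff[OF DERIV_const dp], of 1] h1' by (simp add: dt_def t_def)
  have hs: "((\<lambda>y. sqrt (m2 - p y)) has_real_derivative ds) (at x)"
    using sqrt_chain[OF DERIV_diff[OF DERIV_const dp], of m2] h1 by (simp add: ds_def s_def)
  have hQ: "((\<lambda>y. u y + 2 * sqrt (m2 - p y)) has_real_derivative dQ) (at x)"
    using DERIV_add[OF du DERIV_cmult[OF hs, of 2]] by (simp add: dQ_def)
  have hV: "((\<lambda>y. sqrt (1 - p y) / (u y + 2 * sqrt (m2 - p y))) has_real_derivative dV) (at x)"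
    using DERIV_divide[OF ht hQ] Qpos by (simp add: dV_def Q_def t_def s_def)
  have hP: "((\<lambda>y. 2 * sqrt (sqrt (1 - p y) / (u y + 2 * sqrt (m2 - p y)))) has_real_derivative dP) (at x)"
    using DERIV_cmult[OF sqrt_chain[OF hV], of 2] Vpos by (simp add: dP_def V_def Q_def t_def s_def)
  have hrr: "((\<lambda>y. (u y - 2 * sqrt (m2 - p y)) / (u y + 2 * sqrt (m2 - p y))) has_real_derivative dr) (at x)"
    using DERIV_divide[OF DERIV_diff[OF du DERIV_cmult[OF hs, of 2]] hQ] Qpos
    by (simp add: dr_def Q_def s_def)
  have hr: "((\<lambda>y. ellK (sqrt ((u y - 2 * sqrt (m2 - p y)) / (u y + 2 * sqrt (m2 - p y))))) has_real_derivative EE' r * dr) (at x)"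
    using EE_chain[OF hrr] r01 by (simp add: r_def Q_def s_def)
  have hkk: "((\<lambda>y. (1 - u y / (2 * sqrt (1 - p y))) / 2) has_real_derivative dk) (at x)"
  proof -
    have nz: "2 * sqrt (1 - p x) \<noteq> 0" using tpos t_def by simp
    have "((\<lambda>y. (1 - u y / (2 * sqrt (1 - p y))) / 2) has_real_derivative
       (0 - (a * (2 * sqrt (1 - p x)) - u x * (2 * dt)) / (2 * sqrt (1 - p x) * (2 * sqrt (1 - p x)))) / 2) (at x)"
      by (intro DERIV_cdivide DERIV_diff DERIV_const DERIV_divide du DERIV_cmult ht nz)
    then show ?thesis by (simp add: dk_def t_def)
  qed
  have hk: "((\<lambda>y. ellK (sqrt ((1 - u y / (2 * sqrt (1 - p y))) / 2))) has_real_derivative EE' k * dk) (at x)"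
    using EE_chain[OF hkk] k01 by (simp add: k_def t_def)
  have Ekpos: "0 < EE k" using k01 EE_pos by simp
  have eq1: "ellK (sqrt r) = EE r" "ellK (sqrt k) = EE k" using r01 k01 ellK_sqrt by auto
  have e1: "ellK (sqrt ((u x - 2 * sqrt (m2 - p x)) / (u x + 2 * sqrt (m2 - p x)))) = EE r"
    using eq1 by (simp only: r_def Q_def s_def)
  have e2: "ellK (sqrt ((1 - u x / (2 * sqrt (1 - p x))) / 2)) = EE k"
    using eq1 by (simp only: k_def t_def)
  have e3: "2 * sqrt (sqrt (1 - p x) / (u x + 2 * sqrt (m2 - p x))) = P"
    by (simp only: P_def V_def Q_def t_def s_def)
  have nz: "ellK (sqrt ((1 - u x / (2 * sqrt (1 - p x))) / 2)) \<noteq> 0" using e2 Ekpos by simp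
  have "((\<lambda>y. Gf m2 (u y) (p y)) has_real_derivative
        ((dP * EE r + EE' r * dr * P) * EE k - (P * EE r) * (EE' k * dk)) / (EE k * EE k)) (at x)"
    unfolding Gf_def by (rule DERIV_divide[OF DERIV_mult[OF hP hr] hk nz, unfolded e1 e2 e3])
  then show ?thesis
    by (simp only: DG_def Let_def t_def s_def Q_def dt_def ds_def dQ_def V_def dV_def P_def dP_def r_def dr_def k_def dk_def)
qed



lemma DG_sign:
  assumes h1: "p0 < m2" and hm: "m2 < 1"
    and h3: "2 * sqrt (m2 - p0) < u0" and h4: "u0 < 2 * sqrt (1 - p0)"
  shows "0 < DG m2 u0 p0 (- u0 / (2 * (1 - p0))) 1"
proof -
  define a where "a = - u0 / (2 * (1 - p0))"
  define b :: real where "b = 1"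
  define t where "t = sqrt (1 - p0)"
  define s where "s = sqrt (m2 - p0)"
  define Q where "Q = u0 + 2 * s"
  define dt where "dt = - b / (2 * t)"
  define ds where "ds = - b / (2 * s)"
  define dQ where "dQ = a + 2 * ds"
  define V where "V = t / Q"
  define dV where "dV = (dt * Q - t * dQ) / (Q * Q)"
  define P where "P = 2 * sqrt V"
  define dP where "dP = 2 * (dV / (2 * sqrt V))"
  define r where "r = (u0 - 2 * s) / Q"
  define dr where "dr = ((a - 2 * ds) * Q - (u0 - 2 * s) * dQ) / (Q * Q)"
  define k where "k = (1 - u0 / (2 * t)) / 2"
  define dk where "dk = - ((a * (2 * t) - u0 * (2 * dt)) / ((2 * t) * (2 * t))) / 2"
  have DGeq: "DG m2 u0 p0 a b = ((dP * EE r + EE' r * dr * P) * EE k - (P * EE r) * (EE' k * dk)) / (EE k * EE k)"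
    by (simp only: DG_def Let_def t_def s_def Q_def dt_def ds_def dQ_def V_def dV_def P_def dP_def r_def dr_def k_def dk_def)
  have tpos: "0 < t" using h1 hm by (simp add: t_def)
  have spos: "0 < s" using h1 by (simp add: s_def)
  have tt: "t * t = 1 - p0" using h1 hm by (simp add: t_def)
  have ss: "s * s = m2 - p0" using h1 by (simp add: s_def)
  have st: "s * s < t * t" using tt ss hm by simp
  have u0pos: "0 < u0" using h3 spos unfolding s_def by linarith
  have Qpos: "0 < Q" using u0pos spos by (simp add: Q_def)
  have Vpos: "0 < V" using tpos Qpos by (simp add: V_def)
  have r01: "0 < r" "r < 1"
  proof -
    have "0 < u0 - 2 * s" using h3 by (simp add: s_def)
    then show "0 < r" using Qpos by (simp add: r_def)
    show "r < 1" using Qpos spos by (simp add: r_def Q_def divide_less_eq)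
  qed
  have k01: "0 < k" "k < 1"
  proof -
    have "u0 < 2 * t" using h4 by (simp add: t_def)
    then have a1: "u0 / (2 * t) < 1" using tpos by (simp add: divide_less_eq)
    have a2: "0 < u0 / (2 * t)" using tpos u0pos by simp
    show "0 < k" using a1 by (simp add: k_def)
    show "k < 1" using a2 by (simp add: k_def)
  qed
  have aeq: "a = - u0 / (2 * (t * t))" using tt by (simp add: a_def)
  have dk0: "dk = 0"
    using tpos by (simp add: dk_def aeq dt_def b_def field_simps)
  have num1: "dt * Q - t * dQ = (t * t - s * s) / (t * s)"
    using tpos spos by (simp add: dt_def dQ_def ds_def aeq Q_def b_def field_simps)
  have dVpos: "0 < dV"
    using num1 st tpos spos Qpos by (simp add: dV_def)
  have num2: "(a - 2 * ds) * Q - (u0 - 2 * s) * dQ = 2 * u0 * (t * t - s * s) / (s * (t * t))"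
    using tpos spos by (simp add: dQ_def ds_def aeq Q_def b_def field_simps)
  have drpos: "0 < dr"
    using num2 st tpos spos Qpos u0pos by (simp add: dr_def)
  have dPpos: "0 < dP" using dVpos Vpos by (simp add: dP_def)
  have Ppos: "0 < P" using Vpos by (simp add: P_def)
  have Erpos: "0 < EE r" using EE_pos r01 by simp
  have Ekpos: "0 < EE k" using EE_pos k01 by simp
  have E'r: "0 \<le> EE' r" using EE'_nonneg r01 by simp
  have "0 < dP * EE r + EE' r * dr * P"
    using dPpos Erpos E'r drpos Ppos by (simp add: add_pos_nonneg)
  then have "0 < DG m2 u0 p0 a b"
    unfolding DGeq dk0 using Ekpos by simp
  then show ?thesis by (simp add: a_def b_def)
qed



definition FF :: "real \<Rightarrow> real \<Rightarrow> real \<Rightarrow> real \<Rightarrow> real \<Rightarrow> real \<Rightarrow> real \<Rightarrow> real \<Rightarrow> real \<Rightarrow> real \<Rightarrow> real \<Rightarrow> real" where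
  "FF t s Q w u0 Er Ek Er' Ek' a b = (let
     dt = - b / (2 * t); ds = - b / (2 * s); dQ = a + 2 * ds;
     dV = (dt * Q - t * dQ) / (Q * Q);
     P = 2 * w; dP = 2 * (dV / (2 * w));
     dr = ((a - 2 * ds) * Q - (u0 - 2 * s) * dQ) / (Q * Q);
     dk = - ((a * (2 * t) - u0 * (2 * dt)) / ((2 * t) * (2 * t))) / 2
   in ((dP * Er + Er' * dr * P) * Ek - (P * Er) * (Ek' * dk)) / (Ek * Ek))"

lemma FF_lin:
  assumes "t \<noteq> 0" "s \<noteq> 0" "Q \<noteq> 0" "w \<noteq> 0" "Ek \<noteq> 0"
  shows "FF t s Q w u0 Er Ek Er' Ek' a b = a * FF t s Q w u0 Er Ek Er' Ek' 1 0 + b * FF t s Q w u0 Er Ek Er' Ek' 0 1"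
  using assms unfolding FF_def Let_def by (simp add: field_simps)

lemma DG_FF: "DG m2 u0 p0 a b = FF (sqrt (1 - p0)) (sqrt (m2 - p0)) (u0 + 2 * sqrt (m2 - p0))
   (sqrt (sqrt (1 - p0) / (u0 + 2 * sqrt (m2 - p0)))) u0
   (EE ((u0 - 2 * sqrt (m2 - p0)) / (u0 + 2 * sqrt (m2 - p0))))
   (EE ((1 - u0 / (2 * sqrt (1 - p0))) / 2))
   (EE' ((u0 - 2 * sqrt (m2 - p0)) / (u0 + 2 * sqrt (m2 - p0))))
   (EE' ((1 - u0 / (2 * sqrt (1 - p0))) / 2)) a b"
  by (simp only: DG_def FF_def Let_def)



lemma DG_lin:
  assumes h1: "p0 < m2" and hm: "m2 < 1"
    and h3: "2 * sqrt (m2 - p0) < u0" and h4: "u0 < 2 * sqrt (1 - p0)"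
  shows "DG m2 u0 p0 a b = a * DG m2 u0 p0 1 0 + b * DG m2 u0 p0 0 1"
proof -
  have spos: "0 < sqrt (m2 - p0)" using h1 by simp
  have tpos: "0 < sqrt (1 - p0)" using h1 hm by simp
  have Qpos: "0 < u0 + 2 * sqrt (m2 - p0)" using h3 spos by linarith
  have wpos: "0 < sqrt (sqrt (1 - p0) / (u0 + 2 * sqrt (m2 - p0)))" using tpos Qpos by simp
  have u0pos: "0 < u0" using h3 spos by linarith
  have k01: "0 < (1 - u0 / (2 * sqrt (1 - p0))) / 2" "(1 - u0 / (2 * sqrt (1 - p0))) / 2 < 1"
  proof -
    have a1: "u0 / (2 * sqrt (1 - p0)) < 1" using h4 tpos by (simp add: divide_less_eq)
    have a2: "0 < u0 / (2 * sqrt (1 - p0))" using tpos u0pos by simp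
    show "0 < (1 - u0 / (2 * sqrt (1 - p0))) / 2" using a1 by simp
    show "(1 - u0 / (2 * sqrt (1 - p0))) / 2 < 1" using a2 by simp
  qed
  have Ek: "EE ((1 - u0 / (2 * sqrt (1 - p0))) / 2) \<noteq> 0" using EE_pos[OF less_imp_le[OF k01(1)] k01(2)] by simp
  show ?thesis unfolding DG_FF
    by (rule FF_lin) (use spos tpos Qpos wpos Ek in auto)
qed

lemma smooth_lin: "smooth_real (\<lambda>g. c0 + \<sigma> * (g - g0))"
  unfolding smooth_real_def
proof (intro exI[of _ "\<lambda>n. if n = 0 then (\<lambda>g. c0 + \<sigma> * (g - g0)) else if n = 1 then (\<lambda>_. \<sigma>) else (\<lambda>_. 0)"] conjI allI)
  fix n :: nat and x :: real
  show "((if n = 0 then (\<lambda>g. c0 + \<sigma> * (g - g0)) else if n = 1 then (\<lambda>_. \<sigma>) else (\<lambda>_. 0)) has_real_derivative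
        (if Suc n = 0 then (\<lambda>g. c0 + \<sigma> * (g - g0)) else if Suc n = 1 then (\<lambda>_. \<sigma>) else (\<lambda>_. 0)) x) (at x)"
  proof (cases "n = 0")
    case True
    then show ?thesis by (auto intro!: derivative_eq_intros)
  next
    case False
    then show ?thesis by (auto intro!: derivative_eq_intros)
  qed
qed simp



lemma region_facts:
  fixes \<mu> g c :: real
  assumes "0 < \<mu>" "\<mu> \<le> 1/2" "(g, c) \<in> regionS \<mu>"
  shows "g * c < (1 - 2*\<mu>)^2" "g + c < -2 * (1 - 2*\<mu>)" "-2 < g + c" "0 < g - c"
proof -
  define m where "m = 1 - 2*\<mu>"
  define q where "q = sqrt (\<mu> * (1 - \<mu>))"
  have m0: "0 \<le> m" "m < 1" using assms by (auto simp: m_def)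
  have mm0: "0 \<le> \<mu> * (1 - \<mu>)" using assms by (intro mult_nonneg_nonneg) auto
  then have qq: "q * q = \<mu> * (1 - \<mu>)" by (simp add: q_def)
  have q0: "0 \<le> q" using mm0 by (simp add: q_def)
  have mq: "1 - m * m = 4 * (q * q)" unfolding qq m_def by (simp add: algebra_simps)
  have muq: "\<mu> \<le> q"
  proof -
    have "\<mu> * (2 * \<mu>) \<le> \<mu> * 1" using assms by (intro mult_left_mono) auto
    then have "\<mu> * \<mu> \<le> q * q" unfolding qq by (simp add: algebra_simps)
    then show ?thesis using q0 by (rule_tac power2_le_imp_le) (simp_all add: power2_eq_square)
  qed
  have cJ: "cJ \<mu> = -1 - 2 * q" by (simp add: cJ_def q_def)
  have ch: "ch \<mu> = - m" by (simp add: ch_def m_def)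
  have "g * c < m * m \<and> g + c < -2 * m \<and> -2 < g + c \<and> 0 < g - c"
  proof (cases "c < cJ \<mu>")
    case True
    then have c1: "c < -1 - 2 * q" "-c - 2 < g" "g < -c - 2 * m"
      using assms(3) cJ ch unfolding regionS_def m_def by auto
    have cneg: "c < 0" using c1 q0 by linarith
    have "g * c < (-c - 2) * c" using c1(2) cneg by (simp add: mult_strict_right_mono_neg)
    moreover have "(c + 1) * (c + 1) > (2*q) * (2*q)"
    proof -
      have "-(c+1) > 2 * q" using c1 by linarith
      then have "(2*q)*(2*q) < (-(c+1))*(-(c+1))" using q0 mult_strict_mono[of "2*q" "-(c+1)" "2*q" "-(c+1)"] by auto
      moreover have "(-(c+1))*(-(c+1)) = (c+1)*(c+1)" by (rule minus_mult_minus)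
      ultimately show ?thesis by simp
    qed
    ultimately have "g * c < m * m" using mq by (simp add: algebra_simps)
    then show ?thesis using c1 cneg q0 by auto
  next
    case False
    then have c2: "-1 - 2 * q \<le> c" "c < - m" "m * m / c < g" "g < -c - 2 * m"
      using assms(3) cJ ch unfolding regionS_def m_def by (auto simp: power2_eq_square)
    have cneg: "c < 0" using c2 m0 by linarith
    have gc: "g * c < m * m"
      using c2(3) cneg by (simp add: divide_less_eq)
    have "m * m < (-c) * (-c)" using c2(2) m0 mult_strict_mono[of m "-c" m "-c"] by auto
    then have cc: "m * m < c * c" by simp
    have "c * (g - c) < 0" using gc cc by (simp add: algebra_simps)
    then have gmc: "0 < g - c" using cneg by (simp add: mult_less_0_iff)
    have c1q: "(c + 1) * (c + 1) \<le> (2*q) * (2*q)"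
    proof -
      have "c + 1 \<ge> - (2*q)" using c2 by linarith
      moreover have "c + 1 \<le> 2 * q" using c2 muq m_def by linarith
      ultimately have "\<bar>c + 1\<bar> \<le> 2 * q" by linarith
      then have "\<bar>c + 1\<bar> * \<bar>c + 1\<bar> \<le> (2 * q) * (2 * q)" using mult_mono[of "\<bar>c + 1\<bar>" "2*q" "\<bar>c + 1\<bar>" "2*q"] by auto
      then show ?thesis by simp
    qed
    have "c * c + 2 * c + m * m \<le> 0" using c1q mq by (simp add: algebra_simps)
    then have "0 \<le> (c * c + 2 * c + m * m) / c" using cneg by (simp add: divide_nonpos_neg)
    moreover have "(c * c + 2 * c + m * m) / c = m * m / c + c + 2" using cneg by (simp add: field_simps)
    ultimately have "m * m / c + c \<ge> -2" by linarith
    then have "-2 < g + c" using c2 by linarith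
    then show ?thesis using gc c2 gmc by auto
  qed
  then show "g * c < (1 - 2*\<mu>)^2" "g + c < -2 * (1 - 2*\<mu>)" "-2 < g + c" "0 < g - c"
    by (auto simp: m_def power2_eq_square)
qed



theorem mainTheorem6:
  fixes \<mu> g0 c0 :: real
  assumes "0 < \<mu>" and "\<mu> \<le> 1/2"
    and "(g0, c0) \<in> regionS \<mu>"
  shows "\<exists>f. smooth_real f \<and> f g0 = c0 \<and>
           (\<exists>D. ((\<lambda>g. rotS \<mu> g (f g)) has_real_derivative D) (at g0) \<and> D \<noteq> 0)"
proof -
  define m2 where "m2 = (1 - 2*\<mu>)^2"
  define u0 where "u0 = g0 - c0"
  define p0 where "p0 = g0 * c0"
  note rf = region_facts[OF assms]
  have m2lt: "m2 < 1"
  proof -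
    have "0 \<le> 1 - 2*\<mu>" "1 - 2*\<mu> < 1" using assms by auto
    then have "(1 - 2*\<mu>) * (1 - 2*\<mu>) < 1 * 1" by (intro mult_strict_mono') auto
    then show ?thesis by (simp add: m2_def power2_eq_square)
  qed
  have h1: "p0 < m2" using rf by (simp add: p0_def m2_def)
  have h1': "p0 < 1" using h1 m2lt by simp
  have u0pos: "0 < u0" using rf by (simp add: u0_def)
  have h3: "2 * sqrt (m2 - p0) < u0"
  proof -
    have s1: "-(g0 + c0) > 2 * (1 - 2*\<mu>)" using rf by linarith
    have "0 \<le> 2 * (1 - 2*\<mu>)" using assms by auto
    then have "(2 * (1 - 2*\<mu>)) * (2 * (1 - 2*\<mu>)) < (-(g0 + c0)) * (-(g0 + c0))"
      using s1 mult_strict_mono[of "2 * (1 - 2*\<mu>)" "-(g0 + c0)" "2 * (1 - 2*\<mu>)" "-(g0 + c0)"] by auto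
    then have "4 * (m2 - p0) < u0 * u0" by (simp add: m2_def p0_def u0_def power2_eq_square algebra_simps)
    then have "m2 - p0 < (u0 / 2)^2" by (simp add: power2_eq_square)
    then have "sqrt (m2 - p0) < sqrt ((u0/2)^2)" by (rule real_sqrt_less_mono)
    then show ?thesis using u0pos by simp
  qed
  have h4: "u0 < 2 * sqrt (1 - p0)"
  proof -
    have "g0 + c0 < 2" using rf(2) assms(2) by (simp add: algebra_simps)
    moreover have "-(g0 + c0) < 2" using rf(3) by linarith
    ultimately have "\<bar>g0 + c0\<bar> < 2" by (simp add: abs_less_iff)
    then have "\<bar>g0 + c0\<bar> * \<bar>g0 + c0\<bar> < 2 * 2" by (intro mult_strict_mono) auto
    then have "u0 * u0 < 4 * (1 - p0)" by (simp add: p0_def u0_def algebra_simps)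
    then have "(u0 / 2)^2 < 1 - p0" by (simp add: power2_eq_square)
    then have "u0 / 2 < sqrt (1 - p0)" by (rule real_less_rsqrt)
    then show ?thesis by simp
  qed
  have gc0: "g0 + c0 \<noteq> 0" using rf(2) assms(2) by (simp add: algebra_simps)
  define X where "X = DG m2 u0 p0 1 0"
  define Y where "Y = DG m2 u0 p0 0 1"
  have lin: "\<And>a b. DG m2 u0 p0 a b = a * X + b * Y"
    unfolding X_def Y_def by (rule DG_lin[OF h1 m2lt h3 h4])
  have sgn: "0 < (- u0 / (2 * (1 - p0))) * X + Y"
    using DG_sign[OF h1 m2lt h3 h4] lin by simp
  have deriv: "((\<lambda>g. rotS \<mu> g (c0 + \<sigma> * (g - g0))) has_real_derivative
       DG m2 u0 p0 (1 - \<sigma>) (c0 + \<sigma> * g0)) (at g0)" for \<sigma>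
  proof -
    have du: "((\<lambda>g. g - (c0 + \<sigma> * (g - g0))) has_real_derivative 1 - \<sigma>) (at g0)"
      by (auto intro!: derivative_eq_intros)
    have dp: "((\<lambda>g. g * (c0 + \<sigma> * (g - g0))) has_real_derivative c0 + \<sigma> * g0) (at g0)"
      by (auto intro!: derivative_eq_intros simp: algebra_simps)
    have "((\<lambda>g. Gf m2 (g - (c0 + \<sigma> * (g - g0))) (g * (c0 + \<sigma> * (g - g0)))) has_real_derivative
       DG m2 (g0 - (c0 + \<sigma> * (g0 - g0))) (g0 * (c0 + \<sigma> * (g0 - g0))) (1 - \<sigma>) (c0 + \<sigma> * g0)) (at g0)"
      by (rule L[OF du dp]) (use h1 h1' h3 h4 in \<open>simp_all add: u0_def p0_def\<close>)
    then show ?thesis by (simp add: rotS_Gf m2_def u0_def p0_def)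
  qed
  show ?thesis
  proof (cases "X + c0 * Y = 0")
    case False
    show ?thesis
      apply (rule exI[of _ "\<lambda>g. c0 + 0 * (g - g0)"])
      using smooth_lin[of c0 0 g0] deriv[of 0] lin[of 1 c0] False by auto
  next
    case True
    have "(c0 + g0) * Y \<noteq> 0"
    proof
      assume "(c0 + g0) * Y = 0"
      then have "Y = 0" using gc0 by (simp add: add.commute)
      then have "X = 0" using True by simp
      then show False using sgn \<open>Y = 0\<close> by simp
    qed
    then show ?thesis
      apply -
      apply (rule exI[of _ "\<lambda>g. c0 + 1 * (g - g0)"])
      using smooth_lin[of c0 1 g0] deriv[of 1] lin[of 0 "c0 + 1 * g0"] by auto
  qed
qed

end
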